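(* For every smooth map $\varphi:\mathbb R^N\to G_R$ (not necessarily a solution of the Euler–Lagrange equations), the Lagrangian coefficients $\mathscr L_k$ satisfy the identity $$\frac{\partial\mathscr L_k}{\partial t^\ell}-\frac{\partial\mathscr L_\ell}{\partial t^k}+\Upsilon_k^m P_{mn}\Upsilon_\ell^n=\{H_k,H_\ell\}_R,\qquad k,\ell=1,\dots,N,$$ with summation over repeated indices.
   Context: Setting: $\mathfrak g$ complex matrix Lie algebra with dual $\mathfrak g^*$, pairing $(\cdot,\cdot)$; $R:\mathfrak g\to\mathfrak g$ solves $[RX,RY]-R([RX,Y]+[X,RY])=-[X,Y]$; $[X,Y]_R=\frac12([RX,Y]+[X,RY])$; $G_R$ the Lie group of $(\mathfrak g,[\cdot,\cdot]_R)$ with associative product $\cdot_R$ and coadjoint action $\mathrm{Ad}^{R*}$; $\Lambda\in\mathfrak g^*$ and $\mathcal O_\Lambda=\{\mathrm{Ad}^{R*}_\varphi\Lambda\}$. $H_k$ ($k=1,\dots,N$) are smooth ($G$-$\mathrm{Ad}^*$-invariant) functions on $\mathfrak g^*$. The Lie–Poisson $R$-bracket is $\{f,g\}_R(\xi)=(\xi,[\nabla f(\xi),\nabla g(\xi)]_R)$. Choose local coordinates $\phi_\alpha$ ($\alpha=1,\dots,M$) on $G_R$; $\pi_\alpha=(\Lambda,\varphi^{-1}\cdot_R\partial\varphi/\partial\phi_\alpha)$, so that $\mathscr L_k=(\mathrm{Ad}^{R*}_\varphi\Lambda,\partial_{t^k}\varphi\cdot_R\varphi^{-1})-H_k(L)=\pi_\alpha\partial_{t^k}\phi_\alpha-H_k(L)$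 with $L=\mathrm{Ad}^{R*}_\varphi\Lambda$. Assume $\chi:G_R\to\mathcal O_\Lambda$, $\varphi\mapsto\mathrm{Ad}^{R*}_\varphi\Lambda$, is a submersion, and let $\xi_m$ ($m=1,\dots,2p$) be local coordinates on $\mathcal O_\Lambda$. The Kostant–Kirillov–Souriau form of $\{\cdot,\cdot\}_R$ on $\mathcal O_\Lambda$ is written $\omega_R=\omega_{mn}\delta\xi_m\wedge\delta\xi_n$ with $\omega_{mn}$ antisymmetric, normalised so that $\Omega_{\alpha\beta}:=\frac{\partial\pi_\alpha}{\partial\phi_\beta}-\frac{\partial\pi_\beta}{\partial\phi_\alpha}=\frac{\partial\xi_m}{\partial\phi_\alpha}\frac{\partial\xi_n}{\partial\phi_\beta}\omega_{mn}$. $P_{mn}$ is defined by $P_{mn}\omega_{nr}=\delta_{mr}$, so that on $\mathcal O_\Lambda$, $\{f,g\}_R=P_{mn}\frac{\partial f}{\partial\xi_m}\frac{\partial g}{\partial\xi_n}$. With $\xi_m(t)=\xi_m(L(t))$, set $\Upsilon_k^n=\sum_m\omega_{mn}\partial_{t^k}\xi_m-\frac{\partial H_k}{\partial\xi_n}$ (the Euler–Lagrange equations of $\mathscr L_k$ are equivalent to $\Upsilon_k^n=0$ for all $n$). *)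

theory Defs
  imports "HOL-Analysis.Analysis"
begin

text \<open>Index types: 'n indexes the times t^k (k = 1..N),
 'a indexes the coordinates phi_alpha on G_R (alpha = 1..M), 'm indexes the coordinates
 xi_m on the coadjoint orbit O_Lambda (m = 1..2p).\<close>

definition tpartial :: "(real^'n \<Rightarrow> 'b::real_normed_vector) \<Rightarrow> 'n \<Rightarrow> real^'n \<Rightarrow> 'b" where
  "tpartial f k t = vector_derivative (\<lambda>s::real. f (t + s *\<^sub>R axis k 1)) (at 0)"

definition smooth_t_on :: "(real^'n) set \<Rightarrow> (real^'n \<Rightarrow> 'b::real_normed_vector) \<Rightarrow> bool" where
  "smooth_t_on U f \<longleftrightarrow> open U \<and>
     (\<forall>ks::'n list. (foldr (\<lambda>k g. tpartial g k) ks f) differentiable_on U)"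

definition cpartial :: "(complex^'a \<Rightarrow> complex) \<Rightarrow> 'a \<Rightarrow> complex^'a \<Rightarrow> complex" where
  "cpartial f b x = deriv (\<lambda>z::complex. f (x + axis b z)) 0"

definition holo_on :: "(complex^'a) set \<Rightarrow> (complex^'a \<Rightarrow> complex) \<Rightarrow> bool" where
  "holo_on W f \<longleftrightarrow> open W \<and>
     (\<forall>x\<in>W. \<exists>D. (f has_derivative D) (at x) \<and> (\<forall>(c::complex) v. D (c *s v) = c * D v))"

definition xivec :: "('m::finite \<Rightarrow> complex^'a \<Rightarrow> complex) \<Rightarrow> complex^'a \<Rightarrow> complex^'m" where
  "xivec \<xi> x = (\<chi> m. \<xi> m x)"

text \<open>Lagrangian coefficient L_k(t) = pi_alpha dphi_alpha/dt^k - H_k(L(t)),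
 where h k is H_k expressed in the orbit coordinates xi.\<close>
definition Lag ::
  "('a::finite \<Rightarrow> complex^'a \<Rightarrow> complex) \<Rightarrow> ('m \<Rightarrow> complex^'a \<Rightarrow> complex)
   \<Rightarrow> ('n \<Rightarrow> complex^'m \<Rightarrow> complex) \<Rightarrow> (real^'n \<Rightarrow> complex^'a) \<Rightarrow> 'n \<Rightarrow> real^'n \<Rightarrow> complex" where
  "Lag \<pi> \<xi> h \<phi> k t =
     (\<Sum>\<alpha>\<in>UNIV. \<pi> \<alpha> (\<phi> t) * tpartial (\<lambda>s. \<phi> s $ \<alpha>) k t) - h k (xivec \<xi> (\<phi> t))"

definition Ups ::
  "('m::finite \<Rightarrow> complex^'a \<Rightarrow> complex) \<Rightarrow> ('m \<Rightarrow> 'm \<Rightarrow> complex^'m \<Rightarrow> complex)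
   \<Rightarrow> ('n \<Rightarrow> complex^'m \<Rightarrow> complex) \<Rightarrow> (real^'n \<Rightarrow> complex^'a) \<Rightarrow> 'n \<Rightarrow> 'm \<Rightarrow> real^'n \<Rightarrow> complex" where
  "Ups \<xi> \<omega> h \<phi> k n t =
     (\<Sum>m\<in>UNIV. \<omega> m n (xivec \<xi> (\<phi> t)) * tpartial (\<lambda>s. \<xi> m (\<phi> s)) k t)
     - cpartial (h k) n (xivec \<xi> (\<phi> t))"

definition PB :: "('m::finite \<Rightarrow> 'm \<Rightarrow> complex^'m \<Rightarrow> complex) \<Rightarrow> (complex^'m \<Rightarrow> complex)
   \<Rightarrow> (complex^'m \<Rightarrow> complex) \<Rightarrow> complex^'m \<Rightarrow> complex" where
  "PB P f g y = (\<Sum>m\<in>UNIV. \<Sum>n\<in>UNIV. P m n y * cpartial f m y * cpartial g n y)"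

end

theory Submission
  imports Defs
begin


lemma line_vd:
  fixes F :: "'x::real_normed_vector \<Rightarrow> 'b::real_normed_vector"
  assumes "(F has_derivative F') (at (q + x *\<^sub>R v))"
  shows "((\<lambda>s. F (q + s *\<^sub>R v)) has_vector_derivative F' v) (at x)"
proof -
  have l: "((\<lambda>s::real. q + s *\<^sub>R v) has_derivative (\<lambda>s. s *\<^sub>R v)) (at x)"
    by (auto intro!: derivative_eq_intros)
  have "((\<lambda>s. F (q + s *\<^sub>R v)) has_derivative (\<lambda>s. F' (s *\<^sub>R v))) (at x)"
    using has_derivative_compose[OF l assms] by (simp add: o_def)
  moreover have "(\<lambda>s. F' (s *\<^sub>R v)) = (\<lambda>s. s *\<^sub>R F' v)"
    using linear_scale[OF has_derivative_linear[OF assms]] by auto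
  ultimately show ?thesis by (simp add: has_vector_derivative_def)
qed

lemma tp_eq:
  fixes F :: "real^'n \<Rightarrow> 'b::real_normed_vector"
  assumes "(F has_derivative F') (at p)"
  shows "tpartial F k p = F' (axis k 1)"
proof -
  have "((\<lambda>s. F (p + s *\<^sub>R axis k 1)) has_vector_derivative F' (axis k 1)) (at 0)"
    using line_vd[of F F' p 0 "axis k 1"] assms by simp
  then show ?thesis unfolding tpartial_def by (rule vector_derivative_at)
qed

lemma lin_bound:
  fixes g :: "real \<Rightarrow> 'b::real_normed_vector"
  assumes h: "0 \<le> h"
    and der: "\<And>y. y \<in> {0..h} \<Longrightarrow> (g has_vector_derivative g' y) (at y)"
    and bnd: "\<And>y. y \<in> {0..h} \<Longrightarrow> norm (g' y - D) \<le> e"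
  shows "norm (g h - g 0 - h *\<^sub>R D) \<le> 3 * e * h"
proof -
  have "norm (g h - g 0 - (h - 0) *\<^sub>R g' 0) \<le> norm (h - 0) * (2*e)"
  proof (rule vector_differentiable_bound_linearization[where S="{0..h}"])
    show "\<And>x. x \<in> {0..h} \<Longrightarrow> (g has_vector_derivative g' x) (at x within {0..h})"
      using der has_vector_derivative_at_within by blast
    show "closed_segment 0 h \<subseteq> {0..h}" using h by (simp add: closed_segment_eq_real_ivl)
    show "0 \<in> {0..h}" using h by simp
    fix x assume "x \<in> {0..h}"
    then have "norm (g' x - D) \<le> e" "norm (g' 0 - D) \<le> e" using bnd h by auto
    then show "norm (g' x - g' 0) \<le> 2 * e"
      using norm_triangle_ineq4[of "g' x - D" "g' 0 - D"] by simp
  qed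
  then have 1: "norm (g h - g 0 - h *\<^sub>R g' 0) \<le> h * (2*e)" using h by simp
  have "norm (h *\<^sub>R g' 0 - h *\<^sub>R D) = h * norm (g' 0 - D)"
    using h by (simp flip: scaleR_diff_right)
  also have "\<dots> \<le> h * e" using bnd[of 0] h by (simp add: mult_left_mono)
  finally have 2: "norm (h *\<^sub>R g' 0 - h *\<^sub>R D) \<le> h * e" .
  have "norm (g h - g 0 - h *\<^sub>R D) \<le> norm (g h - g 0 - h *\<^sub>R g' 0) + norm (h *\<^sub>R g' 0 - h *\<^sub>R D)"
    by (rule order_trans[OF _ norm_triangle_ineq]) (simp add: algebra_simps)
  then show ?thesis using 1 2 by (simp add: algebra_simps)
qed

lemma clairaut_half:
  fixes f :: "real^'n \<Rightarrow> 'b::real_normed_vector"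
  assumes r: "0 < h" "2*h < r" and na: "norm a = 1" and nb: "norm b = 1"
    and fd: "\<And>p. p \<in> ball t r \<Longrightarrow> (f has_derivative f' p) (at p)"
    and gaeq: "\<And>p. p \<in> ball t r \<Longrightarrow> f' p a = ga p"
    and gad: "\<And>p. p \<in> ball t r \<Longrightarrow> (ga has_derivative ga' p) (at p)"
    and bnd: "\<And>p. p \<in> ball t r \<Longrightarrow> norm (ga' p b - D) \<le> e"
  shows "norm (f (t + h *\<^sub>R a + h *\<^sub>R b) - f (t + h *\<^sub>R a) - f (t + h *\<^sub>R b) + f t - (h*h) *\<^sub>R D)
     \<le> 9 * e * h * h"
proof -
  have inb: "t + x *\<^sub>R a + y *\<^sub>R b \<in> ball t r" if "x \<in> {0..h}" "y \<in> {0..h}" for x y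
  proof -
    have "norm (x *\<^sub>R a + y *\<^sub>R b) \<le> norm (x *\<^sub>R a) + norm (y *\<^sub>R b)" by (rule norm_triangle_ineq)
    also have "\<dots> = x + y" using that na nb by simp
    finally have "norm (x *\<^sub>R a + y *\<^sub>R b) < r" using that r by simp
    then show ?thesis by (simp add: dist_norm norm_minus_commute add.commute)
  qed
  have e0: "0 \<le> e" using bnd[of t] r by (smt (verit) centre_in_ball norm_ge_zero)
  have step1: "norm (ga (t + x *\<^sub>R a + h *\<^sub>R b) - ga (t + x *\<^sub>R a) - h *\<^sub>R D) \<le> 3 * e * h"
    if x: "x \<in> {0..h}" for x
  proof -
    have "norm ((\<lambda>y. ga (t + x *\<^sub>R a + y *\<^sub>R b)) h - (\<lambda>y. ga (t + x *\<^sub>R a + y *\<^sub>R b)) 0 - h *\<^sub>R D) \<le> 3 * e * h"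
    proof (rule lin_bound[where g'="\<lambda>y. ga' (t + x *\<^sub>R a + y *\<^sub>R b) b"])
      show "0 \<le> h" using r by simp
      fix y assume y: "y \<in> {0..h}"
      show "((\<lambda>y. ga (t + x *\<^sub>R a + y *\<^sub>R b)) has_vector_derivative ga' (t + x *\<^sub>R a + y *\<^sub>R b) b) (at y)"
        by (rule line_vd) (rule gad[OF inb[OF x y]])
      show "norm (ga' (t + x *\<^sub>R a + y *\<^sub>R b) b - D) \<le> e" by (rule bnd[OF inb[OF x y]])
    qed
    then show ?thesis by simp
  qed
  define phi where "phi x = f (t + h *\<^sub>R b + x *\<^sub>R a) - f (t + x *\<^sub>R a)" for x
  have A: "norm (phi h - phi 0 - h *\<^sub>R (h *\<^sub>R D)) \<le> 3 * (3 * e * h) * h"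
  proof (rule lin_bound[where g'="\<lambda>x. ga (t + x *\<^sub>R a + h *\<^sub>R b) - ga (t + x *\<^sub>R a)"])
    show "0 \<le> h" using r by simp
    fix x assume x: "x \<in> {0..h}"
    have p1: "t + h *\<^sub>R b + x *\<^sub>R a = t + x *\<^sub>R a + h *\<^sub>R b" by (simp add: algebra_simps)
    have i1: "t + h *\<^sub>R b + x *\<^sub>R a \<in> ball t r" unfolding p1 using inb[OF x, of h] r by simp
    have i0: "t + x *\<^sub>R a \<in> ball t r" using inb[OF x, of 0] r by simp
    have d1: "((\<lambda>s. f (t + h *\<^sub>R b + s *\<^sub>R a)) has_vector_derivative f' (t + h *\<^sub>R b + x *\<^sub>R a) a) (at x)"
      by (rule line_vd) (rule fd[OF i1])
    have d0: "((\<lambda>s. f (t + s *\<^sub>R a)) has_vector_derivative f' (t + x *\<^sub>R a) a) (at x)"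
      by (rule line_vd) (rule fd[OF i0])
    show "(phi has_vector_derivative ga (t + x *\<^sub>R a + h *\<^sub>R b) - ga (t + x *\<^sub>R a)) (at x)"
      unfolding phi_def using has_vector_derivative_diff[OF d1 d0] gaeq[OF i1] gaeq[OF i0] p1 by simp
    show "norm (ga (t + x *\<^sub>R a + h *\<^sub>R b) - ga (t + x *\<^sub>R a) - h *\<^sub>R D) \<le> 3 * e * h"
      by (rule step1[OF x])
  qed
  have B: "phi h - phi 0 - h *\<^sub>R (h *\<^sub>R D) =
     f (t + h *\<^sub>R a + h *\<^sub>R b) - f (t + h *\<^sub>R a) - f (t + h *\<^sub>R b) + f t - (h*h) *\<^sub>R D"
    unfolding phi_def by (simp add: algebra_simps)
  show ?thesis using A unfolding B by (simp add: mult_ac)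
qed

lemma clairaut:
  fixes f :: "real^'n \<Rightarrow> 'b::real_normed_vector"
  assumes U: "open U" "t \<in> U" and fU: "f differentiable_on U"
    and gk: "tpartial f k differentiable_on U" and gl: "tpartial f l differentiable_on U"
    and c1: "continuous (at t) (tpartial (tpartial f k) l)"
    and c2: "continuous (at t) (tpartial (tpartial f l) k)"
  shows "tpartial (tpartial f k) l t = tpartial (tpartial f l) k t"
proof -
  define D1 where "D1 = tpartial (tpartial f k) l t"
  define D2 where "D2 = tpartial (tpartial f l) k t"
  have fd: "(f has_derivative frechet_derivative f (at p)) (at p)" if "p \<in> U" for p
    using fU U that by (simp add: differentiable_on_eq_differentiable_at frechet_derivative_works)
  have gkd: "(tpartial f k has_derivative frechet_derivative (tpartial f k) (at p)) (at p)" if "p \<in> U" for p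
    using gk U that by (simp add: differentiable_on_eq_differentiable_at frechet_derivative_works)
  have gld: "(tpartial f l has_derivative frechet_derivative (tpartial f l) (at p)) (at p)" if "p \<in> U" for p
    using gl U that by (simp add: differentiable_on_eq_differentiable_at frechet_derivative_works)
  have key: "norm (D1 - D2) \<le> 18 * e" if e: "e > 0" for e
  proof -
    obtain d1 where d1: "d1 > 0" "\<And>p. dist p t < d1 \<Longrightarrow> dist (tpartial (tpartial f k) l p) D1 < e"
      using c1 e unfolding continuous_at_eps_delta D1_def by (metis dist_commute)
    obtain d2 where d2: "d2 > 0" "\<And>p. dist p t < d2 \<Longrightarrow> dist (tpartial (tpartial f l) k p) D2 < e"
      using c2 e unfolding continuous_at_eps_delta D2_def by (metis dist_commute)
    obtain r0 where r0: "r0 > 0" "ball t r0 \<subseteq> U" using U open_contains_ball by blast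
    define r where "r = min r0 (min d1 d2)"
    define h where "h = r / 3"
    have r: "r > 0" "ball t r \<subseteq> U" using r0 d1 d2 unfolding r_def by auto
    have h: "0 < h" "2 * h < r" using r unfolding h_def by auto
    have inU: "p \<in> U" if "p \<in> ball t r" for p using that r by auto
    have dd: "dist p t < d1" "dist p t < d2" if "p \<in> ball t r" for p
      using that unfolding r_def by (auto simp: dist_commute)
    have N1: "norm (f (t + h *\<^sub>R axis k 1 + h *\<^sub>R axis l 1) - f (t + h *\<^sub>R axis k 1)
        - f (t + h *\<^sub>R axis l 1) + f t - (h*h) *\<^sub>R D1) \<le> 9 * e * h * h"
    proof (rule clairaut_half[where f' = "\<lambda>p. frechet_derivative f (at p)" and ga = "tpartial f k"
        and ga' = "\<lambda>p. frechet_derivative (tpartial f k) (at p)", OF h])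
      fix p assume p: "p \<in> ball t r"
      show "(f has_derivative frechet_derivative f (at p)) (at p)" using fd inU p by blast
      show "frechet_derivative f (at p) (axis k 1) = tpartial f k p"
        using tp_eq[OF fd[OF inU[OF p]]] by simp
      show "(tpartial f k has_derivative frechet_derivative (tpartial f k) (at p)) (at p)"
        using gkd inU p by blast
      show "norm (frechet_derivative (tpartial f k) (at p) (axis l 1) - D1) \<le> e"
        using tp_eq[OF gkd[OF inU[OF p]], of l] d1(2)[OF dd(1)[OF p]] by (simp add: dist_norm)
    qed auto
    have N2: "norm (f (t + h *\<^sub>R axis l 1 + h *\<^sub>R axis k 1) - f (t + h *\<^sub>R axis l 1)
        - f (t + h *\<^sub>R axis k 1) + f t - (h*h) *\<^sub>R D2) \<le> 9 * e * h * h"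
    proof (rule clairaut_half[where f' = "\<lambda>p. frechet_derivative f (at p)" and ga = "tpartial f l"
        and ga' = "\<lambda>p. frechet_derivative (tpartial f l) (at p)", OF h])
      fix p assume p: "p \<in> ball t r"
      show "(f has_derivative frechet_derivative f (at p)) (at p)" using fd inU p by blast
      show "frechet_derivative f (at p) (axis l 1) = tpartial f l p"
        using tp_eq[OF fd[OF inU[OF p]]] by simp
      show "(tpartial f l has_derivative frechet_derivative (tpartial f l) (at p)) (at p)"
        using gld inU p by blast
      show "norm (frechet_derivative (tpartial f l) (at p) (axis k 1) - D2) \<le> e"
        using tp_eq[OF gld[OF inU[OF p]], of k] d2(2)[OF dd(2)[OF p]] by (simp add: dist_norm)
    qed auto
    define X where "X = f (t + h *\<^sub>R axis k 1 + h *\<^sub>R axis l 1) - f (t + h *\<^sub>R axis k 1)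
        - f (t + h *\<^sub>R axis l 1) + f t"
    have X2: "f (t + h *\<^sub>R axis l 1 + h *\<^sub>R axis k 1) - f (t + h *\<^sub>R axis l 1)
        - f (t + h *\<^sub>R axis k 1) + f t = X" unfolding X_def by (simp add: algebra_simps)
    have "(h*h) * norm (D1 - D2) = norm ((X - (h*h) *\<^sub>R D2) - (X - (h*h) *\<^sub>R D1))"
      by (simp add: algebra_simps flip: scaleR_diff_right)
    also have "\<dots> \<le> norm (X - (h*h) *\<^sub>R D2) + norm (X - (h*h) *\<^sub>R D1)" by (rule norm_triangle_ineq4)
    also have "\<dots> \<le> (h*h) * (18 * e)"
    proof -
      have "norm (X - (h*h) *\<^sub>R D2) \<le> 9 * e * h * h" using N2 X2 by simp
      moreover have "norm (X - (h*h) *\<^sub>R D1) \<le> 9 * e * h * h" using N1 unfolding X_def by simp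
      ultimately show ?thesis by (simp add: algebra_simps)
    qed
    finally show ?thesis using h by (simp add: mult_le_cancel_left_pos)
  qed
  have "D1 = D2"
  proof (rule ccontr)
    assume "D1 \<noteq> D2"
    then have "norm (D1 - D2) > 0" by simp
    with key[of "norm (D1 - D2) / 36"] show False by simp
  qed
  then show ?thesis unfolding D1_def D2_def .
qed



lemma swap4:
  fixes F :: "'a::finite \<Rightarrow> 'b::finite \<Rightarrow> 'c::finite \<Rightarrow> 'd::finite \<Rightarrow> 'e::comm_monoid_add"
  shows "(\<Sum>a\<in>UNIV. \<Sum>b\<in>UNIV. \<Sum>c\<in>UNIV. \<Sum>d\<in>UNIV. F a b c d) = (\<Sum>c\<in>UNIV. \<Sum>d\<in>UNIV. \<Sum>a\<in>UNIV. \<Sum>b\<in>UNIV. F a b c d)"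
proof -
  have "(\<Sum>a\<in>UNIV. \<Sum>b\<in>UNIV. \<Sum>c\<in>UNIV. \<Sum>d\<in>UNIV. F a b c d) = (\<Sum>a\<in>UNIV. \<Sum>c\<in>UNIV. \<Sum>b\<in>UNIV. \<Sum>d\<in>UNIV. F a b c d)"
    by (rule sum.cong[OF refl], rule sum.swap)
  also have "\<dots> = (\<Sum>a\<in>UNIV. \<Sum>c\<in>UNIV. \<Sum>d\<in>UNIV. \<Sum>b\<in>UNIV. F a b c d)"
    by (rule sum.cong[OF refl], rule sum.cong[OF refl], rule sum.swap)
  also have "\<dots> = (\<Sum>c\<in>UNIV. \<Sum>a\<in>UNIV. \<Sum>d\<in>UNIV. \<Sum>b\<in>UNIV. F a b c d)"
    by (rule sum.swap)
  also have "\<dots> = (\<Sum>c\<in>UNIV. \<Sum>d\<in>UNIV. \<Sum>a\<in>UNIV. \<Sum>b\<in>UNIV. F a b c d)"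
    by (rule sum.cong[OF refl], rule sum.swap)
  finally show ?thesis .
qed

lemma algA:
  fixes u :: "'n \<Rightarrow> 'a::finite \<Rightarrow> complex" and c :: "'a \<Rightarrow> 'a \<Rightarrow> complex"
    and J :: "'m::finite \<Rightarrow> 'a \<Rightarrow> complex" and om :: "'m \<Rightarrow> 'm \<Rightarrow> complex"
  assumes nm: "\<And>\<alpha> \<beta>. c \<alpha> \<beta> - c \<beta> \<alpha> = (\<Sum>m\<in>UNIV. \<Sum>n\<in>UNIV. J m \<alpha> * J n \<beta> * om m n)"
  shows "(\<Sum>\<alpha>\<in>UNIV. (\<Sum>\<beta>\<in>UNIV. u l \<beta> * c \<alpha> \<beta>) * u k \<alpha>) - (\<Sum>\<alpha>\<in>UNIV. (\<Sum>\<beta>\<in>UNIV. u k \<beta> * c \<alpha> \<beta>) * u l \<alpha>)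
    = (\<Sum>m\<in>UNIV. \<Sum>n\<in>UNIV. (\<Sum>\<alpha>\<in>UNIV. u k \<alpha> * J m \<alpha>) * (\<Sum>\<beta>\<in>UNIV. u l \<beta> * J n \<beta>) * om m n)"
proof -
  have e1: "(\<Sum>\<alpha>\<in>UNIV. (\<Sum>\<beta>\<in>UNIV. u k \<beta> * c \<alpha> \<beta>) * u l \<alpha>) = (\<Sum>\<alpha>\<in>UNIV. \<Sum>\<beta>\<in>UNIV. u k \<alpha> * u l \<beta> * c \<beta> \<alpha>)"
  proof -
    have "(\<Sum>\<alpha>\<in>UNIV. \<Sum>\<beta>\<in>UNIV. u k \<alpha> * u l \<beta> * c \<beta> \<alpha>) = (\<Sum>\<beta>\<in>UNIV. \<Sum>\<alpha>\<in>UNIV. u k \<alpha> * u l \<beta> * c \<beta> \<alpha>)"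
      by (rule sum.swap)
    then show ?thesis by (simp add: sum_distrib_right sum_distrib_left mult_ac)
  qed
  have e2: "(\<Sum>\<alpha>\<in>UNIV. (\<Sum>\<beta>\<in>UNIV. u l \<beta> * c \<alpha> \<beta>) * u k \<alpha>) = (\<Sum>\<alpha>\<in>UNIV. \<Sum>\<beta>\<in>UNIV. u k \<alpha> * u l \<beta> * c \<alpha> \<beta>)"
    by (simp add: sum_distrib_right sum_distrib_left mult_ac)
  have "(\<Sum>\<alpha>\<in>UNIV. \<Sum>\<beta>\<in>UNIV. u k \<alpha> * u l \<beta> * c \<alpha> \<beta>) - (\<Sum>\<alpha>\<in>UNIV. \<Sum>\<beta>\<in>UNIV. u k \<alpha> * u l \<beta> * c \<beta> \<alpha>)
     = (\<Sum>\<alpha>\<in>UNIV. \<Sum>\<beta>\<in>UNIV. u k \<alpha> * u l \<beta> * (c \<alpha> \<beta> - c \<beta> \<alpha>))"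
    by (simp add: sum_subtractf right_diff_distrib)
  also have "\<dots> = (\<Sum>\<alpha>\<in>UNIV. \<Sum>\<beta>\<in>UNIV. \<Sum>m\<in>UNIV. \<Sum>n\<in>UNIV. u k \<alpha> * J m \<alpha> * (u l \<beta> * J n \<beta>) * om m n)"
    by (simp add: nm sum_distrib_left mult_ac)
  also have "\<dots> = (\<Sum>m\<in>UNIV. \<Sum>n\<in>UNIV. \<Sum>\<alpha>\<in>UNIV. \<Sum>\<beta>\<in>UNIV. u k \<alpha> * J m \<alpha> * (u l \<beta> * J n \<beta>) * om m n)"
    by (rule swap4)
  also have "\<dots> = (\<Sum>m\<in>UNIV. \<Sum>n\<in>UNIV. (\<Sum>\<alpha>\<in>UNIV. u k \<alpha> * J m \<alpha>) * (\<Sum>\<beta>\<in>UNIV. u l \<beta> * J n \<beta>) * om m n)"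
    apply (simp add: sum_distrib_left sum_distrib_right)
    apply (rule sum.cong[OF refl], rule sum.cong[OF refl]) by (rule sum.swap)
  finally show ?thesis using e1 e2 by simp
qed
lemma algB:
  fixes om P :: "'m::finite \<Rightarrow> 'm \<Rightarrow> complex" and x y gk gl :: "'m \<Rightarrow> complex"
  assumes anti: "\<And>m n. om m n = - om n m"
    and linv: "\<And>m r. (\<Sum>n\<in>UNIV. P m n * om n r) = (if m = r then 1 else 0)"
    and rinv: "\<And>m r. (\<Sum>n\<in>UNIV. om m n * P n r) = (if m = r then 1 else 0)"
  shows "(\<Sum>m\<in>UNIV. \<Sum>n\<in>UNIV. ((\<Sum>j\<in>UNIV. om j m * x j) - gk m) * P m n * ((\<Sum>j\<in>UNIV. om j n * y j) - gl n))
    = - (\<Sum>m\<in>UNIV. \<Sum>n\<in>UNIV. x m * y n * om m n) - (\<Sum>n\<in>UNIV. x n * gl n) + (\<Sum>m\<in>UNIV. gk m * y m)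
      + (\<Sum>m\<in>UNIV. \<Sum>n\<in>UNIV. P m n * gk m * gl n)"
proof -
  define A where "A n = (\<Sum>j\<in>UNIV. om j n * x j)" for n
  define C where "C n = (\<Sum>j\<in>UNIV. om j n * y j)" for n
  have i: "(\<Sum>n\<in>UNIV. P m n * C n) = - y m" for m
  proof -
    have "(\<Sum>n\<in>UNIV. P m n * C n) = (\<Sum>n\<in>UNIV. \<Sum>j\<in>UNIV. y j * (P m n * om j n))"
      unfolding C_def by (simp add: sum_distrib_left mult_ac)
    also have "\<dots> = (\<Sum>j\<in>UNIV. \<Sum>n\<in>UNIV. y j * (P m n * om j n))" by (rule sum.swap)
    also have "\<dots> = (\<Sum>j\<in>UNIV. y j * (\<Sum>n\<in>UNIV. P m n * om j n))" by (simp add: sum_distrib_left)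
    also have "\<dots> = (\<Sum>j\<in>UNIV. - y j * (if m = j then 1 else 0))"
    proof (rule sum.cong[OF refl])
      fix j
      have "(\<Sum>n\<in>UNIV. P m n * om j n) = - (\<Sum>n\<in>UNIV. P m n * om n j)"
        by (simp add: anti[of j] sum_negf)
      then show "y j * (\<Sum>n\<in>UNIV. P m n * om j n) = - y j * (if m = j then 1 else 0)"
        by (simp add: linv)
    qed
    also have "\<dots> = - y m" by (simp add: sum_negf mult.commute[of "y _"] if_distrib[of "\<lambda>z. z * _"] cong: if_cong)
    finally show ?thesis .
  qed
  have ii: "(\<Sum>m\<in>UNIV. A m * P m n) = x n" for n
  proof -
    have "(\<Sum>m\<in>UNIV. A m * P m n) = (\<Sum>m\<in>UNIV. \<Sum>j\<in>UNIV. x j * (om j m * P m n))"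
      unfolding A_def by (simp add: sum_distrib_right sum_distrib_left mult_ac)
    also have "\<dots> = (\<Sum>j\<in>UNIV. \<Sum>m\<in>UNIV. x j * (om j m * P m n))" by (rule sum.swap)
    also have "\<dots> = (\<Sum>j\<in>UNIV. x j * (if j = n then 1 else 0))"
      by (simp add: rinv flip: sum_distrib_left)
    also have "\<dots> = x n" by (simp add: if_distrib cong: if_cong)
    finally show ?thesis .
  qed
  have s2: "(\<Sum>n\<in>UNIV. (\<Sum>m\<in>UNIV. A m * P m n) * gl n) = (\<Sum>m\<in>UNIV. \<Sum>n\<in>UNIV. A m * P m n * gl n)"
  proof -
    have "(\<Sum>n\<in>UNIV. (\<Sum>m\<in>UNIV. A m * P m n) * gl n) = (\<Sum>n\<in>UNIV. \<Sum>m\<in>UNIV. A m * P m n * gl n)"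
      by (simp add: sum_distrib_right)
    also have "\<dots> = (\<Sum>m\<in>UNIV. \<Sum>n\<in>UNIV. A m * P m n * gl n)" by (rule sum.swap)
    finally show ?thesis .
  qed
  have "(\<Sum>m\<in>UNIV. \<Sum>n\<in>UNIV. (A m - gk m) * P m n * (C n - gl n))
     = (\<Sum>m\<in>UNIV. A m * (\<Sum>n\<in>UNIV. P m n * C n)) - (\<Sum>n\<in>UNIV. (\<Sum>m\<in>UNIV. A m * P m n) * gl n)
       - (\<Sum>m\<in>UNIV. gk m * (\<Sum>n\<in>UNIV. P m n * C n)) + (\<Sum>m\<in>UNIV. \<Sum>n\<in>UNIV. P m n * gk m * gl n)"
    unfolding s2
    by (simp add: algebra_simps sum_distrib_left sum_subtractf sum.distrib)
  also have "\<dots> = - (\<Sum>m\<in>UNIV. A m * y m) - (\<Sum>n\<in>UNIV. x n * gl n) + (\<Sum>m\<in>UNIV. gk m * y m)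
      + (\<Sum>m\<in>UNIV. \<Sum>n\<in>UNIV. P m n * gk m * gl n)"
    by (simp add: i ii sum_negf)
  also have "(\<Sum>m\<in>UNIV. A m * y m) = (\<Sum>m\<in>UNIV. \<Sum>n\<in>UNIV. x m * y n * om m n)"
  proof -
    have "(\<Sum>m\<in>UNIV. A m * y m) = (\<Sum>n\<in>UNIV. \<Sum>m\<in>UNIV. x m * y n * om m n)"
      unfolding A_def by (simp add: sum_distrib_right sum_distrib_left mult_ac)
    also have "\<dots> = (\<Sum>m\<in>UNIV. \<Sum>n\<in>UNIV. x m * y n * om m n)" by (rule sum.swap)
    finally show ?thesis .
  qed
  finally show ?thesis unfolding A_def C_def .
qed



lemma bl_axis: "bounded_linear (axis i :: 'b::real_normed_vector \<Rightarrow> 'b^'n)"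
proof (rule bounded_linear_intro[where K=1])
  fix x y :: 'b and r :: real
  show "axis i (x + y) = (axis i x + axis i y :: 'b^'n)" by (simp add: vec_eq_iff axis_def)
  show "axis i (r *\<^sub>R x) = (r *\<^sub>R axis i x :: 'b^'n)" by (simp add: vec_eq_iff axis_def)
  have "norm (axis i x :: 'b^'n) \<le> (\<Sum>j\<in>UNIV. norm ((axis i x :: 'b^'n) $ j))"
    unfolding norm_vec_def by (rule L2_set_le_sum) simp
  also have "\<dots> = norm x" by (simp add: axis_def if_distrib cong: if_cong)
  finally show "norm (axis i x :: 'b^'n) \<le> norm x * 1" by simp
qed

lemma xivec_sum: "xivec \<xi> x = (\<Sum>m\<in>UNIV. axis m (\<xi> m x))"
  by (simp add: xivec_def vec_eq_iff axis_def sum_component if_distrib cong: if_cong)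

lemma holo_deriv:
  assumes "holo_on W f" "x \<in> W"
  shows "\<exists>D. (f has_derivative D) (at x) \<and> (\<forall>v. D v = (\<Sum>\<beta>\<in>UNIV. v $ \<beta> * cpartial f \<beta> x))"
proof -
  obtain D where D: "(f has_derivative D) (at x)" and cl: "\<And>(c::complex) v. D (c *s v) = c * D v"
    using assms unfolding holo_on_def by blast
  have ax: "axis \<beta> z = z *s axis \<beta> (1::complex)" for \<beta> and z :: complex
    by (simp add: vec_eq_iff axis_def vector_scalar_mult_def)
  have cp: "cpartial f \<beta> x = D (axis \<beta> 1)" for \<beta>
  proof -
    have l: "((\<lambda>z. x + axis \<beta> z) has_derivative axis \<beta>) (at 0)"
      using bounded_linear.has_derivative[OF bl_axis, of "\<lambda>z. z" "\<lambda>z. z" "at (0::complex)"]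
      by (auto intro!: derivative_eq_intros)
    have "((\<lambda>z. f (x + axis \<beta> z)) has_derivative (\<lambda>z. D (axis \<beta> z))) (at 0)"
    proof -
      have z0: "x + axis \<beta> (0::complex) = x" by (simp add: vec_eq_iff axis_def)
      show ?thesis using has_derivative_compose[OF l, of f D] D by (simp add: o_def z0)
    qed
    moreover have "(\<lambda>z. D (axis \<beta> z)) = (*) (D (axis \<beta> 1))"
    proof
      fix z :: complex
      have "D (axis \<beta> z) = D (z *s axis \<beta> 1)" using ax[of \<beta> z] by metis
      then show "D (axis \<beta> z) = D (axis \<beta> 1) * z" by (simp add: cl mult.commute)
    qed
    ultimately have "((\<lambda>z. f (x + axis \<beta> z)) has_field_derivative D (axis \<beta> 1)) (at 0)"
      by (simp add: has_field_derivative_def)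
    then show ?thesis unfolding cpartial_def by (rule DERIV_imp_deriv)
  qed
  have "D v = (\<Sum>\<beta>\<in>UNIV. v $ \<beta> * cpartial f \<beta> x)" for v
  proof -
    have "D v = D (\<Sum>\<beta>\<in>UNIV. v $ \<beta> *s axis \<beta> 1)" by (simp add: basis_expansion)
    also have "\<dots> = (\<Sum>\<beta>\<in>UNIV. D (v $ \<beta> *s axis \<beta> 1))"
      by (rule linear_sum[OF has_derivative_linear[OF D]])
    also have "\<dots> = (\<Sum>\<beta>\<in>UNIV. v $ \<beta> * cpartial f \<beta> x)" by (simp add: cl cp)
    finally show ?thesis .
  qed
  with D show ?thesis by blast
qed



theorem mainTheorem5:
  fixes \<phi> :: "real^('n::finite) \<Rightarrow> complex^('a::finite)"
    and \<pi> :: "'a \<Rightarrow> complex^'a \<Rightarrow> complex"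
    and \<xi> :: "'m::finite \<Rightarrow> complex^'a \<Rightarrow> complex"
    and \<omega> P :: "'m \<Rightarrow> 'm \<Rightarrow> complex^'m \<Rightarrow> complex"
    and h :: "'n \<Rightarrow> complex^'m \<Rightarrow> complex"
    and U :: "(real^'n) set" and V :: "(complex^'a) set" and W :: "(complex^'m) set"
  assumes even_dim: "even CARD('m)"
    and chartV: "open V"
    and smooth_phi: "smooth_t_on U \<phi>"
    and phi_in: "\<phi> ` U \<subseteq> V"
    and pi_holo: "\<And>\<alpha>. holo_on V (\<pi> \<alpha>)"
    and xi_holo: "\<And>m. holo_on V (\<xi> m)"
    and submersion: "\<And>x w. x \<in> V \<Longrightarrow>
          \<exists>v::complex^'a. \<forall>m. (\<Sum>\<alpha>\<in>UNIV. cpartial (\<xi> m) \<alpha> x * v $ \<alpha>) = w $ m"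
    and W_holo: "xivec \<xi> ` V \<subseteq> W" "\<And>k. holo_on W (h k)"
    and omega_antisym: "\<And>y m n. y \<in> xivec \<xi> ` V \<Longrightarrow> \<omega> m n y = - \<omega> n m y"
    and normalisation: "\<And>x \<alpha> \<beta>. x \<in> V \<Longrightarrow>
          cpartial (\<pi> \<alpha>) \<beta> x - cpartial (\<pi> \<beta>) \<alpha> x =
          (\<Sum>m\<in>UNIV. \<Sum>n\<in>UNIV. cpartial (\<xi> m) \<alpha> x * cpartial (\<xi> n) \<beta> x * \<omega> m n (xivec \<xi> x))"
    and P_inv: "\<And>y m r. y \<in> xivec \<xi> ` V \<Longrightarrow>
          (\<Sum>n\<in>UNIV. P m n y * \<omega> n r y) = (if m = r then 1 else 0)"
    and t_in: "t \<in> U"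
  shows "tpartial (Lag \<pi> \<xi> h \<phi> k) l t - tpartial (Lag \<pi> \<xi> h \<phi> l) k t
         + (\<Sum>m\<in>UNIV. \<Sum>n\<in>UNIV. Ups \<xi> \<omega> h \<phi> k m t * P m n (xivec \<xi> (\<phi> t)) * Ups \<xi> \<omega> h \<phi> l n t)
         = PB P (h k) (h l) (xivec \<xi> (\<phi> t))"
proof -
  have Uo: "open U" and dU: "\<And>ks. (foldr (\<lambda>k g. tpartial g k) ks \<phi>) differentiable_on U"
    using smooth_phi unfolding smooth_t_on_def by auto
  have phidiff: "\<phi> differentiable_on U" using dU[of "[]"] by simp
  define D\<phi> where "D\<phi> p = frechet_derivative \<phi> (at p)" for p
  have phiD: "(\<phi> has_derivative D\<phi> p) (at p)" if "p \<in> U" for p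
    using phidiff Uo that unfolding D\<phi>_def
    by (simp add: differentiable_on_eq_differentiable_at frechet_derivative_works)
  have psidiff: "tpartial \<phi> j differentiable_on U" for j using dU[of "[j]"] by simp
  define D\<psi> where "D\<psi> j p = frechet_derivative (tpartial \<phi> j) (at p)" for j p
  have psiD: "(tpartial \<phi> j has_derivative D\<psi> j p) (at p)" if "p \<in> U" for j p
    using psidiff[of j] Uo that unfolding D\<psi>_def
    by (simp add: differentiable_on_eq_differentiable_at frechet_derivative_works)
  have comp: "tpartial (\<lambda>s. \<phi> s $ \<alpha>) j p = tpartial \<phi> j p $ \<alpha>" if "p \<in> U" for \<alpha> j p
  proof -
    have "((\<lambda>s. \<phi> s $ \<alpha>) has_derivative (\<lambda>v. D\<phi> p v $ \<alpha>)) (at p)"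
      by (rule bounded_linear.has_derivative[OF bounded_linear_vec_nth phiD[OF that]])
    then show ?thesis using tp_eq[OF phiD[OF that]] tp_eq by metis
  qed
  have PsiD: "((\<lambda>s. tpartial (\<lambda>s. \<phi> s $ \<alpha>) j s) has_derivative (\<lambda>v. D\<psi> j t v $ \<alpha>)) (at t)" for \<alpha> j
    by (rule has_derivative_transform_within_open[OF
          bounded_linear.has_derivative[OF bounded_linear_vec_nth psiD[OF t_in]] Uo t_in])
       (simp add: comp)
  define S where "S j i = tpartial (tpartial \<phi> j) i t" for j i
  have DpsiS: "D\<psi> j t (axis i 1) = S j i" for i j
    unfolding S_def using tp_eq[OF psiD[OF t_in]] by metis
  have contS: "continuous (at t) (tpartial (tpartial \<phi> j) i)" for i j
  proof -
    have "tpartial (tpartial \<phi> j) i differentiable_on U" using dU[of "[i, j]"] by simp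
    then have "tpartial (tpartial \<phi> j) i differentiable (at t)"
      using Uo t_in by (simp add: differentiable_on_eq_differentiable_at)
    then show ?thesis by (rule differentiable_imp_continuous_within)
  qed
  have Ssym: "S k l = S l k" unfolding S_def
    by (rule clairaut[OF Uo t_in phidiff psidiff psidiff contS contS])
  define x0 where "x0 = \<phi> t"
  define y0 where "y0 = xivec \<xi> x0"
  have x0V: "x0 \<in> V" using phi_in t_in unfolding x0_def by auto
  have y0W: "y0 \<in> W" using W_holo(1) x0V unfolding y0_def by auto
  have y0im: "y0 \<in> xivec \<xi> ` V" using x0V unfolding y0_def by auto
  obtain Dpi where Dpi: "\<And>\<alpha>. (\<pi> \<alpha> has_derivative Dpi \<alpha>) (at x0) \<and>
      (\<forall>v. Dpi \<alpha> v = (\<Sum>\<beta>\<in>UNIV. v $ \<beta> * cpartial (\<pi> \<alpha>) \<beta> x0))"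
    using choice[of "\<lambda>\<alpha> D. (\<pi> \<alpha> has_derivative D) (at x0) \<and>
      (\<forall>v. D v = (\<Sum>\<beta>\<in>UNIV. v $ \<beta> * cpartial (\<pi> \<alpha>) \<beta> x0))"]
      holo_deriv[OF pi_holo x0V] by blast
  obtain Dxi where Dxi: "\<And>m. (\<xi> m has_derivative Dxi m) (at x0) \<and>
      (\<forall>v. Dxi m v = (\<Sum>\<beta>\<in>UNIV. v $ \<beta> * cpartial (\<xi> m) \<beta> x0))"
    using choice[of "\<lambda>m D. (\<xi> m has_derivative D) (at x0) \<and>
      (\<forall>v. D v = (\<Sum>\<beta>\<in>UNIV. v $ \<beta> * cpartial (\<xi> m) \<beta> x0))"]
      holo_deriv[OF xi_holo x0V] by blast
  obtain Dh where Dh: "\<And>j. (h j has_derivative Dh j) (at y0) \<and>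
      (\<forall>v. Dh j v = (\<Sum>\<beta>\<in>UNIV. v $ \<beta> * cpartial (h j) \<beta> y0))"
    using choice[of "\<lambda>j D. (h j has_derivative D) (at y0) \<and>
      (\<forall>v. D v = (\<Sum>\<beta>\<in>UNIV. v $ \<beta> * cpartial (h j) \<beta> y0))"]
      holo_deriv[OF W_holo(2) y0W] by blast
  define u where "u j = tpartial \<phi> j t" for j
  have uD: "D\<phi> t (axis j 1) = u j" for j unfolding u_def using tp_eq[OF phiD[OF t_in]] by metis
  define xd where "xd j n = (\<Sum>\<alpha>\<in>UNIV. u j $ \<alpha> * cpartial (\<xi> n) \<alpha> x0)" for j n
  have xiD: "((\<lambda>s. \<xi> m (\<phi> s)) has_derivative (\<lambda>v. Dxi m (D\<phi> t v))) (at t)" for m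
    using has_derivative_compose[OF phiD[OF t_in], of "\<xi> m" "Dxi m"] Dxi[of m]
    unfolding x0_def by (simp add: o_def)
  have xichain: "tpartial (\<lambda>s. \<xi> m (\<phi> s)) j t = xd j m" for j m
    using tp_eq[OF xiD[of m], of j] Dxi[of m] uD[of j] unfolding xd_def by simp
  have piD: "((\<lambda>s. \<pi> \<alpha> (\<phi> s)) has_derivative (\<lambda>v. Dpi \<alpha> (D\<phi> t v))) (at t)" for \<alpha>
    using has_derivative_compose[OF phiD[OF t_in], of "\<pi> \<alpha>" "Dpi \<alpha>"] Dpi[of \<alpha>]
    unfolding x0_def by (simp add: o_def)
  have XD: "((\<lambda>s. xivec \<xi> (\<phi> s)) has_derivative (\<lambda>v. \<Sum>m\<in>UNIV. axis m (Dxi m (D\<phi> t v)))) (at t)"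
    unfolding xivec_sum
    by (intro has_derivative_sum bounded_linear.has_derivative[OF bl_axis] xiD)
  have hD: "((\<lambda>s. h j (xivec \<xi> (\<phi> s))) has_derivative
      (\<lambda>v. Dh j (\<Sum>m\<in>UNIV. axis m (Dxi m (D\<phi> t v))))) (at t)" for j
    using has_derivative_compose[OF XD, of "h j" "Dh j"] Dh[of j]
    unfolding y0_def x0_def by (simp add: o_def)
  have LagT: "tpartial (Lag \<pi> \<xi> h \<phi> j) i t =
      (\<Sum>\<alpha>\<in>UNIV. \<pi> \<alpha> x0 * S j i $ \<alpha> + (\<Sum>\<beta>\<in>UNIV. u i $ \<beta> * cpartial (\<pi> \<alpha>) \<beta> x0) * u j $ \<alpha>)
      - (\<Sum>n\<in>UNIV. xd i n * cpartial (h j) n y0)" for i j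
  proof -
    have L: "Lag \<pi> \<xi> h \<phi> j = (\<lambda>s. (\<Sum>\<alpha>\<in>UNIV. \<pi> \<alpha> (\<phi> s) * tpartial (\<lambda>s. \<phi> s $ \<alpha>) j s)
        - h j (xivec \<xi> (\<phi> s)))"
      by (rule ext) (simp add: Lag_def)
    have "(Lag \<pi> \<xi> h \<phi> j has_derivative (\<lambda>v. (\<Sum>\<alpha>\<in>UNIV. \<pi> \<alpha> (\<phi> t) * (D\<psi> j t v $ \<alpha>)
         + Dpi \<alpha> (D\<phi> t v) * tpartial (\<lambda>s. \<phi> s $ \<alpha>) j t)
         - Dh j (\<Sum>m\<in>UNIV. axis m (Dxi m (D\<phi> t v))))) (at t)"
      unfolding L
      by (intro has_derivative_diff has_derivative_sum has_derivative_mult piD PsiD hD)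
    from tp_eq[OF this, of i] have "tpartial (Lag \<pi> \<xi> h \<phi> j) i t =
      (\<Sum>\<alpha>\<in>UNIV. \<pi> \<alpha> x0 * S j i $ \<alpha> + Dpi \<alpha> (u i) * u j $ \<alpha>)
         - Dh j (\<Sum>m\<in>UNIV. axis m (Dxi m (u i)))"
      using DpsiS uD comp[OF t_in] unfolding x0_def u_def by simp
    also have "\<dots> = (\<Sum>\<alpha>\<in>UNIV. \<pi> \<alpha> x0 * S j i $ \<alpha> + (\<Sum>\<beta>\<in>UNIV. u i $ \<beta> * cpartial (\<pi> \<alpha>) \<beta> x0) * u j $ \<alpha>)
      - (\<Sum>n\<in>UNIV. xd i n * cpartial (h j) n y0)"
      using Dpi Dh Dxi unfolding xd_def
      by (simp add: sum_component axis_def if_distrib cong: if_cong)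
    finally show ?thesis .
  qed
  have UpsT: "Ups \<xi> \<omega> h \<phi> j n t = (\<Sum>m\<in>UNIV. \<omega> m n y0 * xd j m) - cpartial (h j) n y0" for j n
    unfolding Ups_def y0_def x0_def by (simp add: xichain)
  have anti: "\<And>m n. \<omega> m n y0 = - \<omega> n m y0" using omega_antisym[OF y0im] .
  have linv: "\<And>m r. (\<Sum>n\<in>UNIV. P m n y0 * \<omega> n r y0) = (if m = r then 1 else 0)"
    using P_inv[OF y0im] .
  have rinv: "\<And>m r. (\<Sum>n\<in>UNIV. \<omega> m n y0 * P n r y0) = (if m = r then 1 else 0)"
  proof -
    define Pm :: "complex^'m^'m" where "Pm = (\<chi> i j. P i j y0)"
    define Om :: "complex^'m^'m" where "Om = (\<chi> i j. \<omega> i j y0)"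
    have "Pm ** Om = mat 1"
      unfolding Pm_def Om_def by (simp add: vec_eq_iff matrix_matrix_mult_def mat_def linv)
    then have "Om ** Pm = mat 1" using matrix_left_right_inverse by blast
    then have "(Om ** Pm) $ m $ r = mat 1 $ m $ r" for m r by simp
    then show "\<And>m r. (\<Sum>n\<in>UNIV. \<omega> m n y0 * P n r y0) = (if m = r then 1 else 0)"
      unfolding Pm_def Om_def by (simp add: matrix_matrix_mult_def mat_def)
  qed
  have nm: "\<And>\<alpha> \<beta>. cpartial (\<pi> \<alpha>) \<beta> x0 - cpartial (\<pi> \<beta>) \<alpha> x0 =
      (\<Sum>m\<in>UNIV. \<Sum>n\<in>UNIV. cpartial (\<xi> m) \<alpha> x0 * cpartial (\<xi> n) \<beta> x0 * \<omega> m n y0)"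
    using normalisation[OF x0V] unfolding y0_def by simp
  have A: "(\<Sum>\<alpha>\<in>UNIV. (\<Sum>\<beta>\<in>UNIV. u l $ \<beta> * cpartial (\<pi> \<alpha>) \<beta> x0) * u k $ \<alpha>)
      - (\<Sum>\<alpha>\<in>UNIV. (\<Sum>\<beta>\<in>UNIV. u k $ \<beta> * cpartial (\<pi> \<alpha>) \<beta> x0) * u l $ \<alpha>)
    = (\<Sum>m\<in>UNIV. \<Sum>n\<in>UNIV. xd k m * xd l n * \<omega> m n y0)"
    unfolding xd_def
    by (rule algA[where u="\<lambda>j \<alpha>. u j $ \<alpha>" and c="\<lambda>\<alpha> \<beta>. cpartial (\<pi> \<alpha>) \<beta> x0"
        and J="\<lambda>n \<alpha>. cpartial (\<xi> n) \<alpha> x0" and om="\<lambda>m n. \<omega> m n y0", OF nm])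
  have B: "(\<Sum>m\<in>UNIV. \<Sum>n\<in>UNIV. ((\<Sum>j\<in>UNIV. \<omega> j m y0 * xd k j) - cpartial (h k) m y0) * P m n y0
        * ((\<Sum>j\<in>UNIV. \<omega> j n y0 * xd l j) - cpartial (h l) n y0))
    = - (\<Sum>m\<in>UNIV. \<Sum>n\<in>UNIV. xd k m * xd l n * \<omega> m n y0) - (\<Sum>n\<in>UNIV. xd k n * cpartial (h l) n y0)
      + (\<Sum>m\<in>UNIV. cpartial (h k) m y0 * xd l m)
      + (\<Sum>m\<in>UNIV. \<Sum>n\<in>UNIV. P m n y0 * cpartial (h k) m y0 * cpartial (h l) n y0)"
    by (rule algB[where om="\<lambda>m n. \<omega> m n y0" and P="\<lambda>m n. P m n y0", OF anti linv rinv])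
  have C: "(\<Sum>m\<in>UNIV. cpartial (h k) m y0 * xd l m) = (\<Sum>n\<in>UNIV. xd l n * cpartial (h k) n y0)"
    by (simp add: mult.commute)
  have Sc: "(\<Sum>\<alpha>\<in>UNIV. \<pi> \<alpha> x0 * S k l $ \<alpha>) = (\<Sum>\<alpha>\<in>UNIV. \<pi> \<alpha> x0 * S l k $ \<alpha>)" using Ssym by simp
  show ?thesis
    unfolding LagT UpsT B PB_def y0_def[symmetric] x0_def[symmetric]
    using A C Sc by (simp add: sum.distrib algebra_simps)
qed

end
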